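(* Let $c$ be a real number with $0<c\leq 1/2$. Let $\mathcal{A}$ be the set of all sequences $\mathbf{a}=(a_p)$ indexed by the primes $p$ with $a_p\in\{0,1,\dots,p-1\}$, equipped with the product probability measure under which the $a_p$ are independent and each $a_p$ is uniformly distributed on $\{0,\dots,p-1\}$; write $\mathbf{E}$ for expectation with respect to this measure. For real numbers $1\leq X<Y$ and $\mathbf{a}\in\mathcal{A}$, let $$\Omega_{X,Y}(\mathbf{a})=\Bigl\{x\in[0,1]\,:\,\Bigl|x-\frac{a_p}{p}\Bigr|>\frac{c}{p}\text{ for every prime } p \text{ with } X<p\leq Y\Bigr\},$$ and let $$H_{X,Y}=\sum_{\substack{p \text{ prime}\\ X<p\leq Y}}\frac{1}{p}.$$ Then there is a constant $C\geq 0$ depending only on $c$ such that for all real $1\leq X<Y$, $$\mathbf{E}\bigl(\lambda(\Omega_{X,Y})\bigr)\leq \frac{C}{H_{X,Y}}$$ (whenever $H_{X,Y}>0$), where $\lambda$ denotes Lebesgue measure.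
   Context: The paper writes the conclusion as $\mathbf{E}(\lambda(\Omega_{X,Y}))\ll 1/H_{X,Y}$ with implied constant depending only on $c$; this is what the stated inequality means. *)

theory Defs
  imports "HOL-Probability.Probability"
begin

definition seq_space :: "(nat \<Rightarrow> nat) measure" where
  "seq_space = PiM {p. prime p} (\<lambda>p. measure_pmf (pmf_of_set {0..<p}))"

definition Omega :: "real \<Rightarrow> real \<Rightarrow> real \<Rightarrow> (nat \<Rightarrow> nat) \<Rightarrow> real set" where
  "Omega c X Y a = {x \<in> {0..1}. \<forall>p. prime p \<and> X < real p \<and> real p \<le> Y \<longrightarrow>
       \<bar>x - real (a p) / real p\<bar> > c / real p}"

definition H :: "real \<Rightarrow> real \<Rightarrow> real" where
  "H X Y = (\<Sum>p\<in>{p::nat. prime p \<and> X < real p \<and> real p \<le> Y}. 1 / real p)"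

end

theory Submission
  imports Defs
begin


definition Ep :: "real \<Rightarrow> nat \<Rightarrow> real set" where
  "Ep c p = {x. frac (real p * x) < c}"

lemma Ep_sets[measurable]: "Ep c p \<in> sets borel"
proof -
  have "(\<lambda>x. frac (real p * x)) \<in> borel_measurable borel"
    unfolding frac_def using borel_measurable_real_floor
    by measurable
  then show ?thesis unfolding Ep_def by measurable
qed

lemma count_bound:
  fixes p q :: nat and t c :: real
  assumes "p > 0" "coprime p q" "c \<ge> 0"
  shows "real (card {j\<in>{..<p}. frac (real q * ((real j + t) / real p)) < c}) \<le> c * p + 1"
proof -
  define n :: "nat \<Rightarrow> int" where "n j = int q * int j - int p * \<lfloor>real q * ((real j + t) / real p)\<rfloor>" for j
  have key: "real p * frac (real q * ((real j + t) / real p)) = real_of_int (n j) + real q * t" for j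
    using assms unfolding n_def frac_def by (simp add: field_simps)
  let ?S = "{j\<in>{..<p}. frac (real q * ((real j + t) / real p)) < c}"
  let ?T = "{k::int. - (real q * t) \<le> k \<and> k < c * p - real q * t}"
  have inj: "inj_on n {..<p}"
  proof
    fix i j assume ij: "i \<in> {..<p}" "j \<in> {..<p}" "n i = n j"
    then have "int q * (int i - int j) = int p * (\<lfloor>real q * ((real i + t) / real p)\<rfloor> - \<lfloor>real q * ((real j + t) / real p)\<rfloor>)"
      unfolding n_def by (simp add: algebra_simps)
    then have "int p dvd int q * (int i - int j)" by (metis dvd_triv_left)
    moreover have "coprime (int p) (int q)" using assms by simp
    ultimately have d: "int p dvd (int i - int j)" using coprime_dvd_mult_right_iff by blast
    show "i = j"
    proof (rule ccontr)
      assume "i \<noteq> j"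
      then have "\<bar>int i - int j\<bar> > 0" "\<bar>int i - int j\<bar> < int p" using ij by auto
      with dvd_imp_le_int[OF _ d] show False by auto
    qed
  qed
  have sub: "n ` ?S \<subseteq> ?T"
  proof
    fix k assume "k \<in> n ` ?S"
    then obtain j where j: "j \<in> ?S" "k = n j" by auto
    have "0 \<le> frac (real q * ((real j + t) / real p))" by (simp add: frac_ge_0)
    then have a: "0 \<le> real_of_int (n j) + real q * t" using key[of j] assms by (metis mult_nonneg_nonneg of_nat_0_le_iff)
    have "real p * frac (real q * ((real j + t) / real p)) < real p * c" using j assms by simp
    then have b: "real_of_int (n j) + real q * t < c * p" using key[of j] by (simp add: mult.commute)
    show "k \<in> ?T" using a b j by auto
  qed
  have Teq: "?T = {\<lceil>- (real q * t)\<rceil> ..< \<lceil>c * p - real q * t\<rceil>}"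
    by (auto simp: ceiling_le_iff less_ceiling_iff) 
  have "card ?S = card (n ` ?S)" using inj by (intro card_image[symmetric]) (auto intro: inj_on_subset)
  also have "\<dots> \<le> card ?T" using sub Teq by (intro card_mono) auto
  finally have "real (card ?S) \<le> real (card ?T)" by simp
  also have "\<dots> = real (nat (\<lceil>c * p - real q * t\<rceil> - \<lceil>- (real q * t)\<rceil>))" using Teq by simp
  also have "\<dots> \<le> c * p + 1"
  proof -
    have h1: "real_of_int \<lceil>c * p - real q * t\<rceil> < c * p - real q * t + 1" by linarith
    have h2: "real_of_int \<lceil>- (real q * t)\<rceil> \<ge> - (real q * t)" by linarith
    have h3: "c * p \<ge> 0" using assms by simp
    show ?thesis
    proof (cases "\<lceil>c * p - real q * t\<rceil> - \<lceil>- (real q * t)\<rceil> \<ge> 0")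
      case True
      then have "real (nat (\<lceil>c * p - real q * t\<rceil> - \<lceil>- (real q * t)\<rceil>)) = real_of_int (\<lceil>c * p - real q * t\<rceil> - \<lceil>- (real q * t)\<rceil>)"
        by simp
      then show ?thesis using h1 h2 by linarith
    next
      case False then show ?thesis using h3 by simp
    qed
  qed
  finally show ?thesis .
qed

lemma decomp:
  fixes p :: nat and c :: real and B :: "real set"
  assumes p: "p > 0" and c: "0 \<le> c" "c \<le> 1" and B[measurable]: "B \<in> sets borel"
  shows "emeasure lborel ({0..<1} \<inter> Ep c p \<inter> B) =
    ennreal (1 / real p) * (\<integral>\<^sup>+t. indicator {0..<c} t * of_nat (card {j\<in>{..<p}. (real j + t) / real p \<in> B}) \<partial>lborel)"
proof -
  define A where "A j = {real j / real p ..< (real j + 1) / real p}" for j :: nat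
  define R where "R = Ep c p \<inter> B"
  have R[measurable]: "R \<in> sets borel" unfolding R_def by measurable
  have A[measurable]: "A j \<in> sets borel" for j unfolding A_def by simp
  have memA: "x \<in> A j \<longleftrightarrow> \<lfloor>real p * x\<rfloor> = int j" for x j
  proof -
    have "x \<in> A j \<longleftrightarrow> real j \<le> real p * x \<and> real p * x < real j + 1"
      using p unfolding A_def by (auto simp: field_simps)
    also have "\<dots> \<longleftrightarrow> \<lfloor>real p * x\<rfloor> = int j" by (simp add: floor_eq_iff)
    finally show ?thesis .
  qed
  have fl: "0 \<le> y" if "\<lfloor>y\<rfloor> = int j" for y :: real and j :: nat
    using that by (metis of_int_floor_le of_int_of_nat_eq of_nat_0_le_iff order_trans)
  have pw: "indicator ({0..<1} \<inter> R) x = (\<Sum>j<p. indicator (A j \<inter> R) x :: ennreal)" for x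
  proof -
    have "(\<Sum>j<p. indicator (A j \<inter> R) x :: ennreal) = (\<Sum>j<p. if j = nat \<lfloor>real p * x\<rfloor> \<and> 0 \<le> \<lfloor>real p * x\<rfloor> \<and> x \<in> R then 1 else 0)"
      by (intro sum.cong refl) (auto simp: indicator_def memA dest: fl)
    also have "\<dots> = (if nat \<lfloor>real p * x\<rfloor> < p \<and> 0 \<le> \<lfloor>real p * x\<rfloor> \<and> x \<in> R then 1 else 0)"
      by (simp add: sum.delta' conj_commute)
    also have "\<dots> = indicator ({0..<1} \<inter> R) x"
    proof -
      have "(nat \<lfloor>real p * x\<rfloor> < p \<and> 0 \<le> \<lfloor>real p * x\<rfloor>) \<longleftrightarrow> (0 \<le> x \<and> x < 1)"
      proof -
        have "(nat \<lfloor>real p * x\<rfloor> < p \<and> 0 \<le> \<lfloor>real p * x\<rfloor>) \<longleftrightarrow> (0 \<le> real p * x \<and> real p * x < real p)"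
          by (auto simp: floor_less_iff nat_less_iff)
        also have "\<dots> \<longleftrightarrow> (0 \<le> x \<and> x < 1)" using p
          by (auto simp: zero_le_mult_iff)
        finally show ?thesis .
      qed
      then show ?thesis by (auto simp: indicator_def)
    qed
    finally show ?thesis by simp
  qed
  have shift: "indicator (A j \<inter> R) (real j / real p + (1 / real p) * t) =
      (indicator {0..<c} t * indicator {t. (real j + t) / real p \<in> B} t :: ennreal)" for j t
  proof -
    define y where "y = real j / real p + (1 / real p) * t"
    have e1: "real p * y = real j + t" using p unfolding y_def by (simp add: field_simps)
    have e2: "y = (real j + t) / real p" using p unfolding y_def by (simp add: field_simps)
    have m1: "y \<in> A j \<longleftrightarrow> 0 \<le> t \<and> t < 1"
      unfolding memA e1 by (simp add: floor_eq_iff)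
    have fr: "frac (real p * y) = t" if "0 \<le> t \<and> t < 1"
      unfolding e1 using that by (metis add.commute frac_add_of_int_right frac_eq of_int_of_nat_eq)
    have iff: "y \<in> A j \<inter> R \<longleftrightarrow> (0 \<le> t \<and> t < c) \<and> (real j + t) / real p \<in> B"
      unfolding R_def Ep_def using m1 fr c e2 by auto
    have "indicator (A j \<inter> R) (real j / real p + (1 / real p) * t) = (indicator (A j \<inter> R) y :: ennreal)"
      unfolding y_def ..
    also have "\<dots> = indicator {0..<c} t * indicator {t. (real j + t) / real p \<in> B} t"
      using iff by (simp add: indicator_def)
    finally show ?thesis .
  qed
  have "emeasure lborel ({0..<1} \<inter> R) = (\<integral>\<^sup>+x. indicator ({0..<1} \<inter> R) x \<partial>lborel)"
    by (simp add: nn_integral_indicator)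
  also have "\<dots> = (\<integral>\<^sup>+x. (\<Sum>j<p. indicator (A j \<inter> R) x) \<partial>lborel)"
    by (simp add: pw)
  also have "\<dots> = (\<Sum>j<p. \<integral>\<^sup>+x. indicator (A j \<inter> R) x \<partial>lborel)"
    by (intro nn_integral_sum) simp
  also have "\<dots> = (\<Sum>j<p. ennreal (1 / real p) * \<integral>\<^sup>+t. (indicator {0..<c} t * indicator {t. (real j + t) / real p \<in> B} t) \<partial>lborel)"
  proof (intro sum.cong refl)
    fix j
    have "(\<integral>\<^sup>+x. indicator (A j \<inter> R) x \<partial>lborel) =
       ennreal \<bar>1 / real p\<bar> * (\<integral>\<^sup>+t. indicator (A j \<inter> R) (real j / real p + (1 / real p) * t) \<partial>lborel)"
      using p by (intro nn_integral_real_affine) auto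
    then show "(\<integral>\<^sup>+x. indicator (A j \<inter> R) x \<partial>lborel) = ennreal (1 / real p) * \<integral>\<^sup>+t. (indicator {0..<c} t * indicator {t. (real j + t) / real p \<in> B} t) \<partial>lborel"
      by (simp only: shift abs_of_nonneg[of "1 / real p", OF divide_nonneg_nonneg[OF zero_le_one of_nat_0_le_iff]])
  qed
  also have "\<dots> = ennreal (1 / real p) * (\<Sum>j<p. \<integral>\<^sup>+t. (indicator {0..<c} t * indicator {t. (real j + t) / real p \<in> B} t) \<partial>lborel)"
    by (simp add: sum_distrib_left)
  also have "(\<Sum>j<p. \<integral>\<^sup>+t. (indicator {0..<c} t * indicator {t. (real j + t) / real p \<in> B} t) \<partial>lborel)
     = (\<integral>\<^sup>+t. (\<Sum>j<p. indicator {0..<c} t * indicator {t. (real j + t) / real p \<in> B} t) \<partial>lborel)"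
    by (intro nn_integral_sum[symmetric]) measurable
  also have "(\<lambda>t. (\<Sum>j<p. indicator {0..<c} t * indicator {t. (real j + t) / real p \<in> B} t :: ennreal))
     = (\<lambda>t. indicator {0..<c} t * of_nat (card {j\<in>{..<p}. (real j + t) / real p \<in> B}))"
    by (auto simp: sum_distrib_left[symmetric] indicator_def sum.If_cases Int_def)
  finally show ?thesis unfolding R_def by (simp add: Int_assoc)
qed


lemma nn_ind_mult: "(\<integral>\<^sup>+t. indicator {0..<c} t * k \<partial>lborel) = k * ennreal c" if "0 \<le> c" for k :: ennreal and c :: real
proof -
  have "(\<integral>\<^sup>+t. indicator {0..<c} t * k \<partial>lborel) = (\<integral>\<^sup>+t. k * indicator {0..<c} t \<partial>lborel)"
    by (simp add: mult.commute)
  also have "\<dots> = k * ennreal c" using that by (subst nn_integral_cmult_indicator) auto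
  finally show ?thesis .
qed

lemma ennreal_mult3: "0 \<le> a \<Longrightarrow> 0 \<le> b \<Longrightarrow> 0 \<le> d \<Longrightarrow> ennreal a * (ennreal b * ennreal d) = ennreal (a * (b * d))"
  by (simp add: ennreal_mult)

lemma m1:
  fixes p :: nat and c :: real
  assumes p: "p > 0" and c: "0 \<le> c" "c \<le> 1"
  shows "emeasure lborel ({0..<1} \<inter> Ep c p) = ennreal c"
proof -
  have "emeasure lborel ({0..<1} \<inter> Ep c p) = emeasure lborel ({0..<1} \<inter> Ep c p \<inter> UNIV)" by simp
  also have "\<dots> = ennreal (1 / real p) * (\<integral>\<^sup>+t. indicator {0..<c} t * of_nat p \<partial>lborel)"
    by (subst decomp[OF p c]) simp_all
  also have "\<dots> = ennreal (1 / real p) * (of_nat p * ennreal c)"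
    using c by (simp add: nn_ind_mult)
  also have "\<dots> = ennreal c" using p
    by (simp add: ennreal_of_nat_eq_real_of_nat ennreal_mult''[symmetric] ennreal_mult'[symmetric] field_simps)
  finally show ?thesis .
qed

lemma m2:
  fixes p q :: nat and c :: real
  assumes p: "p > 0" and c: "0 \<le> c" "c \<le> 1" and cop: "coprime p q"
  shows "emeasure lborel ({0..<1} \<inter> Ep c p \<inter> Ep c q) \<le> ennreal (c * (c * p + 1) / p)"
proof -
  have "emeasure lborel ({0..<1} \<inter> Ep c p \<inter> Ep c q) = ennreal (1 / real p) *
     (\<integral>\<^sup>+t. indicator {0..<c} t * of_nat (card {j\<in>{..<p}. (real j + t) / real p \<in> Ep c q}) \<partial>lborel)"
    by (rule decomp[OF p c]) simp
  also have "\<dots> \<le> ennreal (1 / real p) * (\<integral>\<^sup>+t. indicator {0..<c} t * ennreal (c * p + 1) \<partial>lborel)"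
  proof -
    have pt: "indicator {0..<c} t * of_nat (card {j\<in>{..<p}. (real j + t) / real p \<in> Ep c q}) \<le> (indicator {0..<c} t * ennreal (c * p + 1) :: ennreal)" for t
    proof -
    have "real (card {j\<in>{..<p}. (real j + t) / real p \<in> Ep c q}) \<le> c * p + 1"
      using count_bound[OF p cop c(1), of t] by (simp add: Ep_def)
    then have "(of_nat (card {j\<in>{..<p}. (real j + t) / real p \<in> Ep c q}) :: ennreal) \<le> ennreal (c * p + 1)"
      by (simp add: ennreal_of_nat_eq_real_of_nat ennreal_leI)
    then show ?thesis
      by (intro mult_left_mono) auto
    qed
    show ?thesis by (intro mult_left_mono nn_integral_mono pt) simp
  qed
  also have "\<dots> = ennreal (1 / real p) * (ennreal (c * p + 1) * ennreal c)"
    using c by (simp add: nn_ind_mult)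
  also have "\<dots> = ennreal (1 / real p * ((c * p + 1) * c))"
    by (rule ennreal_mult3) (use c in auto)
  also have "1 / real p * ((c * p + 1) * c) = c * (c * p + 1) / p" by simp
  
  finally show ?thesis .
qed



lemma measure_le_of_emeasure: "emeasure M A \<le> ennreal r \<Longrightarrow> 0 \<le> r \<Longrightarrow> measure M A \<le> r"
  by (simp add: measure_def enn2real_leI)

lemma sum_sq_split:
  fixes J :: "nat set" and c Hs P2 :: real
  assumes J: "finite J" "\<And>p. p \<in> J \<Longrightarrow> p > 0"
    and Hs_def: "Hs = (\<Sum>p\<in>J. 1 / real p)" and P2_def: "P2 = (\<Sum>p\<in>J. 1 / real p ^ 2)"
  shows "(\<Sum>p\<in>J. \<Sum>q\<in>J. (c^2 + c / real p + (if p = q then c else 0)) / (real p * real q))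
      = c^2 * Hs^2 + c * P2 * Hs + c * P2"
proof -
  have s1: "(\<Sum>p\<in>J. \<Sum>q\<in>J. c^2 / (real p * real q)) = c^2 * Hs^2"
  proof -
    have "Hs^2 = (\<Sum>p\<in>J. \<Sum>q\<in>J. 1 / real p * (1 / real q))"
      unfolding Hs_def power2_eq_square sum_product ..
    then show ?thesis by (simp add: sum_distrib_left)
  qed
  have s2: "(\<Sum>p\<in>J. \<Sum>q\<in>J. (c / real p) / (real p * real q)) = c * P2 * Hs"
  proof -
    have "P2 * Hs = (\<Sum>p\<in>J. \<Sum>q\<in>J. 1 / real p ^ 2 * (1 / real q))"
      unfolding P2_def Hs_def sum_product ..
    then have "c * P2 * Hs = (\<Sum>p\<in>J. \<Sum>q\<in>J. c * (1 / real p ^ 2 * (1 / real q)))"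
      by (simp add: sum_distrib_left mult.assoc)
    then show ?thesis by (simp add: power2_eq_square mult.assoc)
  qed
  have s3: "(\<Sum>p\<in>J. \<Sum>q\<in>J. (if p = q then c else 0) / (real p * real q)) = c * P2"
  proof -
    have "(\<Sum>p\<in>J. \<Sum>q\<in>J. (if p = q then c else 0) / (real p * real q)) = (\<Sum>p\<in>J. c / (real p * real p))"
    proof (intro sum.cong refl)
      fix p assume "p \<in> J"
      have "(\<Sum>q\<in>J. (if p = q then c else 0) / (real p * real q)) = (\<Sum>q\<in>J. if p = q then c / (real p * real q) else 0)"
        by (intro sum.cong refl) auto
      also have "\<dots> = c / (real p * real p)" using \<open>p \<in> J\<close> J by (simp add: sum.delta)
      finally show "(\<Sum>q\<in>J. (if p = q then c else 0) / (real p * real q)) = c / (real p * real p)" .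
    qed
    also have "\<dots> = c * P2" unfolding P2_def sum_distrib_left by (simp add: power2_eq_square)
    finally show ?thesis .
  qed
  have "(\<Sum>p\<in>J. \<Sum>q\<in>J. (c^2 + c / real p + (if p = q then c else 0)) / (real p * real q))
     = (\<Sum>p\<in>J. \<Sum>q\<in>J. c^2 / (real p * real q)) + (\<Sum>p\<in>J. \<Sum>q\<in>J. (c / real p) / (real p * real q))
       + (\<Sum>p\<in>J. \<Sum>q\<in>J. (if p = q then c else 0) / (real p * real q))"
    by (simp add: add_divide_distrib sum.distrib)
  then show ?thesis using s1 s2 s3 by simp
qed

lemma int_bound:
  fixes c :: real and J :: "nat set"
  assumes c: "0 < c" "c \<le> 1" and J: "finite J" "\<And>p. p \<in> J \<Longrightarrow> prime p" and Hpos: "Hs > 0"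
  and Hs_def: "Hs = (\<Sum>p\<in>J. 1 / real p)" and mu_def: "\<mu> = c * Hs"
  and S_def: "S = (\<lambda>x. \<Sum>p\<in>J. indicator (Ep c p) x / real p)"
  shows "(\<integral>\<^sup>+x. ennreal (indicator {0..<1} x * (4 * (1 - S x / \<mu>)^2 + 2 / \<mu>)) \<partial>lborel)
     \<le> ennreal (4 * (\<Sum>p\<in>J. 1 / real p ^ 2) * (1 + Hs) / (c * Hs^2) + 2 / \<mu>)"
proof -
  define P2 where "P2 = (\<Sum>p\<in>J. 1 / real p ^ 2)"
  define m where "m p = measure lborel ({0..<1} \<inter> Ep c p)" for p
  define mm where "mm p q = measure lborel ({0..<1} \<inter> Ep c p \<inter> Ep c q)" for p q
  have Jpos: "p > 0" if "p \<in> J" for p using J(2)[OF that] prime_gt_0_nat by blast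
  have mupos: "\<mu> > 0" using c Hpos mu_def by simp
  have m_eq: "m p = c" if "p \<in> J" for p
    using m1[OF Jpos[OF that], of c] c unfolding m_def by (simp add: measure_def)
  have mm_le: "mm p q \<le> c^2 + c / real p + (if p = q then c else 0)" if "p \<in> J" "q \<in> J" for p q
  proof (cases "p = q")
    case True
    then have "mm p q = c" using m_eq[OF that(1)] unfolding mm_def m_def by simp
    then show ?thesis using True c by simp
  next
    case False
    have cop: "coprime p q" using J(2)[OF that(1)] J(2)[OF that(2)] False by (simp add: primes_coprime)
    have "mm p q \<le> c * (c * p + 1) / p" unfolding mm_def
      using m2[OF Jpos[OF that(1)] _ _ cop, of c] c by (intro measure_le_of_emeasure) auto
    also have "\<dots> = c^2 + c / real p" using Jpos[OF that(1)] by (simp add: field_simps power2_eq_square)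
    finally show ?thesis using False by simp
  qed
  have fin: "emeasure lborel ({0..<1} \<inter> B) < \<infinity>" for B :: "real set"
  proof -
    have "emeasure lborel ({0..<1} \<inter> B) \<le> emeasure lborel {0..<(1::real)}"
      by (intro emeasure_mono) auto
    then show ?thesis by (simp add: le_less_trans)
  qed
  have hi1: "has_bochner_integral lborel (indicator {0..<1::real}) (1::real)"
    using has_bochner_integral_real_indicator[of "{0..<1::real}" lborel] by simp
  have hi2: "has_bochner_integral lborel (indicator ({0..<1} \<inter> Ep c p)) (m p)" for p
    unfolding m_def using fin[of "Ep c p"] by (intro has_bochner_integral_real_indicator) auto
  have hi3: "has_bochner_integral lborel (indicator ({0..<1} \<inter> Ep c p \<inter> Ep c q)) (mm p q)" for p q
    unfolding mm_def using fin[of "Ep c p \<inter> Ep c q"] by (intro has_bochner_integral_real_indicator) (auto simp: Int_assoc)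
  define V where "V = (4 + 2 / \<mu>) * 1 - (8 / \<mu>) * (\<Sum>p\<in>J. m p / real p)
      + (4 / \<mu>^2) * (\<Sum>p\<in>J. \<Sum>q\<in>J. mm p q / (real p * real q))"
  have hb: "has_bochner_integral lborel (\<lambda>x. (4 + 2 / \<mu>) * indicator {0..<1} x
      - (8 / \<mu>) * (\<Sum>p\<in>J. indicator ({0..<1} \<inter> Ep c p) x / real p)
      + (4 / \<mu>^2) * (\<Sum>p\<in>J. \<Sum>q\<in>J. indicator ({0..<1} \<inter> Ep c p \<inter> Ep c q) x / (real p * real q))) V"
    unfolding V_def
    by (intro has_bochner_integral_add has_bochner_integral_diff has_bochner_integral_mult_right
          has_bochner_integral_sum has_bochner_integral_divide_zero hi1 hi2 hi3)
  have pw: "indicator {0..<1} x * (4 * (1 - S x / \<mu>)^2 + 2 / \<mu>) =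
      (4 + 2 / \<mu>) * indicator {0..<1} x
      - (8 / \<mu>) * (\<Sum>p\<in>J. indicator ({0..<1} \<inter> Ep c p) x / real p)
      + (4 / \<mu>^2) * (\<Sum>p\<in>J. \<Sum>q\<in>J. indicator ({0..<1} \<inter> Ep c p \<inter> Ep c q) x / (real p * real q))" for x
  proof -
    have a: "(\<Sum>p\<in>J. indicator ({0..<1} \<inter> Ep c p) x / real p) = indicator {0..<1} x * S x"
      unfolding S_def sum_distrib_left by (intro sum.cong refl) (simp add: indicator_inter_arith)
    have b: "(\<Sum>p\<in>J. \<Sum>q\<in>J. indicator ({0..<1} \<inter> Ep c p \<inter> Ep c q) x / (real p * real q)) = indicator {0..<1} x * (S x)^2"
    proof -
      have "indicator {0..<1} x * (S x)^2 = (\<Sum>p\<in>J. \<Sum>q\<in>J. indicator {0..<1} x * (indicator (Ep c p) x / real p * (indicator (Ep c q) x / real q)))"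
      proof -
        have "(S x)^2 = (\<Sum>p\<in>J. \<Sum>q\<in>J. (indicator (Ep c p) x / real p) * (indicator (Ep c q) x / real q))"
          unfolding S_def power2_eq_square by (rule sum_product)
        then show ?thesis by (simp only: sum_distrib_left)
      qed
      then show ?thesis by (simp add: indicator_inter_arith mult.assoc)
    qed
    show ?thesis unfolding a b using mupos by (simp add: field_simps power2_eq_square)
  qed
  have meas: "(\<lambda>x. indicator {0..<1} x * (4 * (1 - S x / \<mu>)^2 + 2 / \<mu>)) \<in> borel_measurable lborel"
    unfolding S_def by measurable
  have nn: "(\<integral>\<^sup>+x. ennreal (indicator {0..<1} x * (4 * (1 - S x / \<mu>)^2 + 2 / \<mu>)) \<partial>lborel) = ennreal V"
  proof -
    have hb': "has_bochner_integral lborel (\<lambda>x. indicator {0..<1} x * (4 * (1 - S x / \<mu>)^2 + 2 / \<mu>)) V"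
      using hb unfolding pw[symmetric] .
    have nonneg: "0 \<le> indicator {0..<1} x * (4 * (1 - S x / \<mu>)^2 + 2 / \<mu>)" for x
      using mupos by (simp add: indicator_def)
    have "0 \<le> integral\<^sup>L lborel (\<lambda>x. indicator {0..<1} x * (4 * (1 - S x / \<mu>)^2 + 2 / \<mu>))"
      by (rule integral_nonneg_AE) (simp add: nonneg)
    then have "0 \<le> V"
      using has_bochner_integral_integral_eq[OF hb'] by simp
    then show ?thesis using nn_integral_eq_integrable[OF meas] hb' nonneg
      by (simp add: has_bochner_integral_iff)
  qed
  have s1: "(\<Sum>p\<in>J. m p / real p) = \<mu>"
    unfolding mu_def Hs_def sum_distrib_left by (intro sum.cong refl) (simp add: m_eq)
  have s2: "(\<Sum>p\<in>J. \<Sum>q\<in>J. mm p q / (real p * real q)) \<le> c^2 * Hs^2 + c * P2 * Hs + c * P2"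
  proof -
    have "(\<Sum>p\<in>J. \<Sum>q\<in>J. mm p q / (real p * real q)) \<le>
        (\<Sum>p\<in>J. \<Sum>q\<in>J. (c^2 + c / real p + (if p = q then c else 0)) / (real p * real q))"
      by (intro sum_mono divide_right_mono mm_le) auto
    also have "\<dots> = c^2 * Hs^2 + c * P2 * Hs + c * P2"
      by (rule sum_sq_split[OF J(1) Jpos Hs_def P2_def])
    finally show ?thesis .
  qed
  have "V \<le> (4 + 2 / \<mu>) - 8 + (4 / \<mu>^2) * (c^2 * Hs^2 + c * P2 * Hs + c * P2)"
  proof -
    have t: "(4 / \<mu>^2) * (\<Sum>p\<in>J. \<Sum>q\<in>J. mm p q / (real p * real q)) \<le> (4 / \<mu>^2) * (c^2 * Hs^2 + c * P2 * Hs + c * P2)"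
      by (rule mult_left_mono[OF s2]) simp
    have "V = (4 + 2 / \<mu>) - 8 + (4 / \<mu>^2) * (\<Sum>p\<in>J. \<Sum>q\<in>J. mm p q / (real p * real q))"
      unfolding V_def s1 using mupos by simp
    then show ?thesis using t by linarith
  qed
  also have "\<dots> = 4 * P2 * (1 + Hs) / (c * Hs^2) + 2 / \<mu>"
    using mupos c Hpos unfolding mu_def by (simp add: field_simps power2_eq_square)
  finally have "V \<le> 4 * P2 * (1 + Hs) / (c * Hs^2) + 2 / \<mu>" .
  then show ?thesis unfolding nn P2_def by (simp add: ennreal_leI)
qed



lemma prod_le_inv_sum:
  fixes t :: "nat \<Rightarrow> real"
  assumes "finite J" "\<And>p. p \<in> J \<Longrightarrow> 0 \<le> t p \<and> t p \<le> 1"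
  shows "(\<Prod>p\<in>J. 1 - t p) \<le> 1 / (1 + (\<Sum>p\<in>J. t p))"
  using assms
proof (induction J rule: finite_induct)
  case empty then show ?case by simp
next
  case (insert a F)
  define P where "P = (\<Prod>p\<in>F. 1 - t p)"
  define T where "T = (\<Sum>p\<in>F. t p)"
  have IH: "P \<le> 1 / (1 + T)" unfolding P_def T_def using insert by auto
  have T0: "0 \<le> T" unfolding T_def using insert by (auto intro: sum_nonneg)
  have ta: "0 \<le> t a" "t a \<le> 1" using insert by auto
  have "(\<Prod>p\<in>insert a F. 1 - t p) = (1 - t a) * P" unfolding P_def using insert by simp
  also have "\<dots> \<le> (1 - t a) * (1 / (1 + T))" using IH ta by (intro mult_left_mono) auto
  also have "\<dots> \<le> 1 / (1 + (t a + T))"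
  proof -
    have "(1 - t a) * (1 + (t a + T)) \<le> 1 + T" using ta T0 by (simp add: algebra_simps power2_eq_square mult_nonneg_nonneg)
    then show ?thesis using ta T0 by (simp add: field_simps)
  qed
  also have "\<dots> = 1 / (1 + (\<Sum>p\<in>insert a F. t p))" unfolding T_def using insert by simp
  finally show ?case .
qed

lemma inv_quad_bound:
  fixes s \<mu> :: real
  assumes "0 \<le> s" "0 < \<mu>"
  shows "1 / (1 + s) \<le> 4 * (1 - s / \<mu>)^2 + 2 / \<mu>"
proof (cases "s \<le> \<mu> / 2")
  case True
  then have "s / \<mu> \<le> 1 / 2" using assms by (simp add: field_simps)
  then have "1 / 2 \<le> 1 - s / \<mu>" by simp
  then have "(1/2)^2 \<le> (1 - s / \<mu>)^2" by (intro power_mono) auto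
  then have "1 \<le> 4 * (1 - s / \<mu>)^2" by (simp add: power2_eq_square mult.commute)
  moreover have "1 / (1 + s) \<le> 1" using assms by simp
  moreover have "0 \<le> 2 / \<mu>" using assms by simp
  ultimately show ?thesis by linarith
next
  case False
  then have "1 / (1 + s) \<le> 2 / \<mu>" using assms by (simp add: field_simps)
  moreover have "0 \<le> 4 * (1 - s / \<mu>)^2" by simp
  ultimately show ?thesis by linarith
qed

lemma sum_inv_sq_le:
  "(\<Sum>n\<in>{2..N}. 1 / real n ^ 2) \<le> 1 - 1 / real N" if "N \<ge> 1" for N :: nat
  using that
proof (induction N rule: dec_induct)
  case base then show ?case by simp
next
  case (step n)
  have "(\<Sum>k\<in>{2..Suc n}. 1 / real k ^ 2) = (\<Sum>k\<in>{2..n}. 1 / real k ^ 2) + 1 / real (Suc n) ^ 2"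
    using step by (simp add: sum.atLeast_Suc_atMost_Suc_shift atLeastAtMostSuc_conv)
  also have "\<dots> \<le> 1 - 1 / real n + 1 / real (Suc n) ^ 2" using step by simp
  also have "\<dots> \<le> 1 - 1 / real (Suc n)"
  proof -
    have n: "real n \<ge> 1" using step by simp
    have a: "1 / real (Suc n) ^ 2 \<le> 1 / (real n * real (Suc n))"
      using n by (intro divide_left_mono) (auto simp: power2_eq_square intro!: mult_right_mono mult_pos_pos)
    have b: "1 / (real n * real (Suc n)) = 1 / real n - 1 / real (Suc n)" using n by (simp add: field_simps)
    have "1 / real (Suc n) ^ 2 \<le> 1 / real n - 1 / real (Suc n)" using a b by simp
    then show ?thesis by simp
  qed
  finally show ?case .
qed

lemma P2_le_1:
  fixes J :: "nat set"
  assumes "finite J" "\<And>p. p \<in> J \<Longrightarrow> p \<ge> 2"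
  shows "(\<Sum>p\<in>J. 1 / real p ^ 2) \<le> 1"
proof -
  define N where "N = Max (insert 1 J)"
  have N: "N \<ge> 1" unfolding N_def using assms by simp
  have sub: "J \<subseteq> {2..N}" unfolding N_def using assms by auto
  have "(\<Sum>p\<in>J. 1 / real p ^ 2) \<le> (\<Sum>n\<in>{2..N}. 1 / real n ^ 2)"
    by (intro sum_mono2 sub) auto
  also have "\<dots> \<le> 1 - 1 / real N" using sum_inv_sq_le[OF N] .
  also have "\<dots> \<le> 1" by simp
  finally show ?thesis .
qed



definition Mp :: "nat \<Rightarrow> nat measure" where "Mp p = measure_pmf (pmf_of_set {0..<p})"

lemma seq_eq: "seq_space = PiM {p. prime p} Mp"
  unfolding seq_space_def Mp_def ..

lemma pps: "product_prob_space Mp"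
  by (rule product_prob_spaceI) (simp add: Mp_def prob_space_measure_pmf)

lemma comp_meas: "prime p \<Longrightarrow> (\<lambda>a::nat\<Rightarrow>nat. a p) \<in> seq_space \<rightarrow>\<^sub>M count_space UNIV"
proof -
  assume p: "prime p"
  have "(\<lambda>a::nat\<Rightarrow>nat. a p) \<in> measurable seq_space (Mp p)"
    unfolding seq_eq by (rule measurable_component_singleton) (use p in simp)
  moreover have "measurable seq_space (Mp p) = measurable seq_space (count_space UNIV)"
    by (rule measurable_cong_sets) (simp_all add: Mp_def)
  ultimately show ?thesis by simp
qed

lemma Q_sets: "{w \<in> space (seq_space \<Otimes>\<^sub>M lborel). snd w \<in> Omega c X Y (fst w)} \<in> sets (seq_space \<Otimes>\<^sub>M lborel)"
proof -
  let ?M = "seq_space \<Otimes>\<^sub>M lborel"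
  have P1: "Measurable.pred ?M (\<lambda>w. snd w \<in> {0..1::real})" by measurable
  have P2: "Measurable.pred ?M (\<lambda>w. prime p \<and> X < real p \<and> real p \<le> Y \<longrightarrow> c / real p < \<bar>snd w - real (fst w p) / real p\<bar>)" for p
  proof (cases "prime p")
    case True
    have "(\<lambda>w. fst w p) \<in> ?M \<rightarrow>\<^sub>M count_space UNIV"
      by (rule measurable_compose[OF measurable_fst comp_meas[OF True]])
    then have [measurable]: "(\<lambda>w. real (fst w p)) \<in> borel_measurable ?M"
      by (rule measurable_compose) simp
    show ?thesis by measurable
  next
    case False then show ?thesis by simp
  qed
  have "Measurable.pred ?M (\<lambda>w. snd w \<in> {0..1::real} \<and> (\<forall>p. prime p \<and> X < real p \<and> real p \<le> Y \<longrightarrow> c / real p < \<bar>snd w - real (fst w p) / real p\<bar>))"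
    by (rule pred_intros_logic(3)[OF P1 pred_intros_countable(1)[OF P2]])
  then show ?thesis unfolding Omega_def pred_def mem_Collect_eq .
qed

lemma factor_bound:
  fixes p :: nat and x c :: real
  assumes p: "p > 0" and x: "0 \<le> x" "x < 1"
  shows "measure (Mp p) {k. c / real p < \<bar>x - real k / real p\<bar>} \<le> 1 - indicator (Ep c p) x / real p"
proof -
  let ?A = "{k. c / real p < \<bar>x - real k / real p\<bar>}"
  have ne: "{0..<p} \<noteq> {}" using p by simp
  have m: "measure (Mp p) ?A = real (card ({0..<p} \<inter> ?A)) / real p"
    unfolding Mp_def using ne by (subst measure_pmf_of_set) auto
  show ?thesis
  proof (cases "x \<in> Ep c p")
    case True
    define k0 where "k0 = nat \<lfloor>real p * x\<rfloor>"
    have fl0: "0 \<le> \<lfloor>real p * x\<rfloor>" using x p by simp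
    have k0r: "real k0 = real_of_int \<lfloor>real p * x\<rfloor>" unfolding k0_def using fl0 by simp
    have "real_of_int \<lfloor>real p * x\<rfloor> \<le> real p * x" by simp
    moreover have "real p * x < real p" using x p by simp
    ultimately have "real k0 < real p" using k0r by linarith
    then have k0p: "k0 < p" by simp
    have "x - real k0 / real p = frac (real p * x) / real p"
      using p unfolding k0r frac_def by (simp add: field_simps)
    moreover have "frac (real p * x) < c" using True unfolding Ep_def by simp
    ultimately have "\<bar>x - real k0 / real p\<bar> < c / real p"
      using p by (simp add: frac_ge_0 divide_strict_right_mono)
    then have "k0 \<notin> ?A" by simp
    then have "{0..<p} \<inter> ?A \<subseteq> {0..<p} - {k0}" by auto
    then have "card ({0..<p} \<inter> ?A) \<le> card ({0..<p} - {k0})" by (intro card_mono) auto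
    also have "\<dots> = p - 1" using k0p by simp
    finally have "real (card ({0..<p} \<inter> ?A)) \<le> real p - 1" using p by linarith
    then have "measure (Mp p) ?A \<le> (real p - 1) / real p" unfolding m using p by (simp add: divide_right_mono)
    also have "\<dots> = 1 - indicator (Ep c p) x / real p" using True p by (simp add: field_simps)
    finally show ?thesis .
  next
    case False
    have "measure (Mp p) ?A \<le> 1" unfolding Mp_def by (rule measure_pmf.prob_le_1)
    then show ?thesis using False by simp
  qed
qed



lemma J_finite: "finite {p::nat. prime p \<and> X < real p \<and> real p \<le> Y}"
proof (rule finite_subset)
  show "{p::nat. prime p \<and> X < real p \<and> real p \<le> Y} \<subseteq> {..nat \<lceil>Y\<rceil>}"
  proof
    fix p assume "p \<in> {p::nat. prime p \<and> X < real p \<and> real p \<le> Y}"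
    then have "real p \<le> Y" by simp
    then have "real p \<le> real_of_int \<lceil>Y\<rceil>" by linarith
    then have "int p \<le> \<lceil>Y\<rceil>" by (metis of_int_le_iff of_int_of_nat_eq)
    then show "p \<in> {..nat \<lceil>Y\<rceil>}" by (simp add: le_nat_iff)
  qed
qed simp

lemma expect_bound:
  fixes c X Y :: real
  assumes c: "0 < c" "c \<le> 1/2" and HXY: "H X Y > 0"
  shows "integrable seq_space (\<lambda>a. measure lborel (Omega c X Y a))"
    and "(\<integral>a. measure lborel (Omega c X Y a) \<partial>seq_space) \<le> 1"
    and "(\<integral>a. measure lborel (Omega c X Y a) \<partial>seq_space)
          \<le> 4 * (\<Sum>p\<in>{p. prime p \<and> X < real p \<and> real p \<le> Y}. 1 / real p ^ 2) * (1 + H X Y) / (c * (H X Y)^2) + 2 / (c * H X Y)"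
proof -
  define J where "J = {p::nat. prime p \<and> X < real p \<and> real p \<le> Y}"
  define Hs where "Hs = H X Y"
  define \<mu> where "\<mu> = c * Hs"
  define S where "S = (\<lambda>x. \<Sum>p\<in>J. indicator (Ep c p) x / real p)"
  have Jfin: "finite J" unfolding J_def by (rule J_finite)
  have Jprime: "\<And>p. p \<in> J \<Longrightarrow> prime p" unfolding J_def by simp
  have Jpos: "\<And>p. p \<in> J \<Longrightarrow> p > 0" using Jprime prime_gt_0_nat by blast
  have Hs_def': "Hs = (\<Sum>p\<in>J. 1 / real p)" unfolding Hs_def H_def J_def ..
  have Hpos: "Hs > 0" using HXY Hs_def by simp
  have mupos: "\<mu> > 0" unfolding \<mu>_def using c Hpos by simp
  interpret P: product_prob_space Mp "{p. prime p}" by (rule pps)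
  interpret Sp: prob_space seq_space unfolding seq_eq by (rule prob_space_PiM) (simp add: Mp_def prob_space_measure_pmf)
  interpret PS: pair_sigma_finite seq_space lborel
    by (simp add: pair_sigma_finite_def Sp.sigma_finite_measure_axioms lborel.sigma_finite_measure_axioms)
  define Q where "Q = {w \<in> space (seq_space \<Otimes>\<^sub>M lborel). snd w \<in> Omega c X Y (fst w)}"
  have Qs: "Q \<in> sets (seq_space \<Otimes>\<^sub>M lborel)" unfolding Q_def by (rule Q_sets)
  have slice1: "Pair a -` Q = Omega c X Y a" if "a \<in> space seq_space" for a
    using that by (auto simp: Q_def space_pair_measure)
  have slice2: "(\<lambda>a. (a, x)) -` Q = {a \<in> space seq_space. x \<in> Omega c X Y a}" for x
    by (auto simp: Q_def space_pair_measure)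
  have Om_sub: "Omega c X Y a \<subseteq> {0..1}" for a by (auto simp: Omega_def)
  have Om_le: "emeasure lborel (Omega c X Y a) \<le> 1" for a
  proof -
    have "emeasure lborel (Omega c X Y a) \<le> emeasure lborel {0..1::real}"
      by (rule emeasure_mono[OF Om_sub]) simp
    then show ?thesis by simp
  qed
  have Om_fin: "emeasure lborel (Omega c X Y a) \<noteq> top" for a
  proof -
    have "emeasure lborel (Omega c X Y a) < top" using Om_le[of a] by (rule le_less_trans) simp
    then show ?thesis by simp
  qed
  have f_le: "measure lborel (Omega c X Y a) \<le> 1" for a
    using Om_le[of a] by (intro measure_le_of_emeasure) auto
  have meas_f: "(\<lambda>a. measure lborel (Omega c X Y a)) \<in> borel_measurable seq_space"
  proof -
    have "(\<lambda>a. emeasure lborel (Pair a -` Q)) \<in> borel_measurable seq_space"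
      by (rule lborel.measurable_emeasure_Pair[OF Qs])
    then have "(\<lambda>a. enn2real (emeasure lborel (Pair a -` Q))) \<in> borel_measurable seq_space"
      by measurable
    then show ?thesis
      by (rule measurable_cong[THEN iffD1, rotated]) (simp add: slice1 measure_def)
  qed
  show int: "integrable seq_space (\<lambda>a. measure lborel (Omega c X Y a))"
    by (rule Sp.integrable_const_bound[where B=1]) (use f_le meas_f in auto)
  show "(\<integral>a. measure lborel (Omega c X Y a) \<partial>seq_space) \<le> 1"
    by (rule Sp.integral_le_const[OF int]) (simp add: f_le)
  have pt: "emeasure seq_space {a \<in> space seq_space. x \<in> Omega c X Y a}
      \<le> ennreal (indicator {0..<1} x * (4 * (1 - S x / \<mu>)^2 + 2 / \<mu>))" if "x \<noteq> 1" for x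
  proof (cases "0 \<le> x \<and> x < 1")
    case False
    with that have "x \<notin> {0..1}" by auto
    then have e: "{a \<in> space seq_space. x \<in> Omega c X Y a} = {}" using \<open>x \<notin> {0..1}\<close> by (auto simp: Omega_def)
    show ?thesis unfolding e by simp
  next
    case True
    define A where "A p = {k. c / real p < \<bar>x - real k / real p\<bar>}" for p :: nat
    have set_eq: "{a \<in> space seq_space. x \<in> Omega c X Y a} = {a \<in> space (PiM {p. prime p} Mp). \<forall>p\<in>J. a p \<in> A p}"
      using True unfolding seq_eq by (auto simp: Omega_def J_def A_def)
    have "emeasure seq_space {a \<in> space seq_space. x \<in> Omega c X Y a} = (\<Prod>p\<in>J. emeasure (Mp p) (A p))"
      unfolding set_eq unfolding seq_eq
      by (rule P.emeasure_PiM_Collect) (auto simp: J_def Jfin[unfolded J_def] Mp_def)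
    also have "\<dots> = (\<Prod>p\<in>J. ennreal (measure (Mp p) (A p)))"
      by (intro prod.cong refl) (simp add: Mp_def measure_pmf.emeasure_eq_measure)
    also have "\<dots> = ennreal (\<Prod>p\<in>J. measure (Mp p) (A p))"
      by (rule prod_ennreal) simp
    also have "\<dots> \<le> ennreal (indicator {0..<1} x * (4 * (1 - S x / \<mu>)^2 + 2 / \<mu>))"
    proof (rule ennreal_leI)
      have "(\<Prod>p\<in>J. measure (Mp p) (A p)) \<le> (\<Prod>p\<in>J. 1 - indicator (Ep c p) x / real p)"
        by (intro prod_mono conjI measure_nonneg) (use True Jpos in \<open>auto simp: A_def intro!: factor_bound\<close>)
      also have "\<dots> \<le> 1 / (1 + S x)" unfolding S_def
      proof (rule prod_le_inv_sum[OF Jfin])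
        fix p assume "p \<in> J"
        then have "real p \<ge> 1" using Jpos[of p] by simp
        then show "0 \<le> indicator (Ep c p) x / real p \<and> indicator (Ep c p) x / real p \<le> (1::real)"
          by (auto simp: indicator_def)
      qed
      also have "\<dots> \<le> 4 * (1 - S x / \<mu>)^2 + 2 / \<mu>"
        by (rule inv_quad_bound[OF _ mupos]) (unfold S_def, intro sum_nonneg, simp)
      also have "\<dots> = indicator {0..<1} x * (4 * (1 - S x / \<mu>)^2 + 2 / \<mu>)" using True by simp
      finally show "(\<Prod>p\<in>J. measure (Mp p) (A p)) \<le> indicator {0..<1} x * (4 * (1 - S x / \<mu>)^2 + 2 / \<mu>)" .
    qed
    finally show ?thesis .
  qed
  have "ennreal (\<integral>a. measure lborel (Omega c X Y a) \<partial>seq_space) = (\<integral>\<^sup>+a. ennreal (measure lborel (Omega c X Y a)) \<partial>seq_space)"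
    by (rule nn_integral_eq_integral[symmetric, OF int]) simp
  also have "\<dots> = (\<integral>\<^sup>+a. emeasure lborel (Pair a -` Q) \<partial>seq_space)"
    by (intro nn_integral_cong) (simp add: slice1 emeasure_eq_ennreal_measure[OF Om_fin])
  also have "\<dots> = emeasure (seq_space \<Otimes>\<^sub>M lborel) Q"
    by (rule lborel.emeasure_pair_measure_alt[OF Qs, symmetric])
  also have "\<dots> = (\<integral>\<^sup>+x. emeasure seq_space ((\<lambda>a. (a, x)) -` Q) \<partial>lborel)"
    by (rule PS.emeasure_pair_measure_alt2[OF Qs])
  also have "\<dots> \<le> (\<integral>\<^sup>+x. ennreal (indicator {0..<1} x * (4 * (1 - S x / \<mu>)^2 + 2 / \<mu>)) \<partial>lborel)"
    by (intro nn_integral_mono_AE) (use AE_lborel_singleton[of "1::real"] in \<open>eventually_elim, simp add: slice2 pt\<close>)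
  also have "\<dots> \<le> ennreal (4 * (\<Sum>p\<in>J. 1 / real p ^ 2) * (1 + Hs) / (c * Hs^2) + 2 / \<mu>)"
    by (rule int_bound[OF c(1) _ Jfin Jprime Hpos Hs_def' \<mu>_def S_def]) (use c in simp)
  finally have "ennreal (\<integral>a. measure lborel (Omega c X Y a) \<partial>seq_space)
      \<le> ennreal (4 * (\<Sum>p\<in>J. 1 / real p ^ 2) * (1 + Hs) / (c * Hs^2) + 2 / \<mu>)" .
  moreover have "0 \<le> 4 * (\<Sum>p\<in>J. 1 / real p ^ 2) * (1 + Hs) / (c * Hs^2) + 2 / \<mu>"
    using c Hpos mupos by (intro add_nonneg_nonneg divide_nonneg_nonneg mult_nonneg_nonneg sum_nonneg) auto
  ultimately show "(\<integral>a. measure lborel (Omega c X Y a) \<partial>seq_space)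
          \<le> 4 * (\<Sum>p\<in>{p. prime p \<and> X < real p \<and> real p \<le> Y}. 1 / real p ^ 2) * (1 + H X Y) / (c * (H X Y)^2) + 2 / (c * H X Y)"
    unfolding J_def Hs_def \<mu>_def by (simp add: ennreal_le_iff)
qed



theorem lemma2p1:
  fixes c :: real
  assumes "0 < c" and "c \<le> 1/2"
  shows "\<exists>C\<ge>0. \<forall>X Y::real. 1 \<le> X \<and> X < Y \<and> H X Y > 0 \<longrightarrow>
           integrable seq_space (\<lambda>a. measure lborel (Omega c X Y a)) \<and>
           (\<integral>a. measure lborel (Omega c X Y a) \<partial>seq_space) \<le> C / H X Y"
proof (intro exI[of _ "10 / c"] conjI allI impI)
  show "0 \<le> 10 / c" using assms by simp
  fix X Y :: real
  assume XY: "1 \<le> X \<and> X < Y \<and> H X Y > 0"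
  then have Hp: "H X Y > 0" by simp
  note eb = expect_bound[OF assms Hp]
  show "integrable seq_space (\<lambda>a. measure lborel (Omega c X Y a))" by (rule eb(1))
  define E where "E = (\<integral>a. measure lborel (Omega c X Y a) \<partial>seq_space)"
  define Hs where "Hs = H X Y"
  define P2 where "P2 = (\<Sum>p\<in>{p. prime p \<and> X < real p \<and> real p \<le> Y}. 1 / real p ^ 2)"
  have Hs0: "Hs > 0" using Hp Hs_def by simp
  have P2: "P2 \<le> 1" unfolding P2_def
    by (rule P2_le_1[OF J_finite]) (simp add: prime_ge_2_nat)
  have P20: "0 \<le> P2" unfolding P2_def by (intro sum_nonneg) simp
  have c10: "1 \<le> 10 / c" using assms by (simp add: field_simps)
  have "E \<le> 10 / c / Hs"
  proof (cases "Hs \<le> 1")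
    case True
    have "E \<le> 1" using eb(2) unfolding E_def .
    also have "1 \<le> 1 / Hs" using True Hs0 by (simp add: field_simps)
    also have "1 / Hs \<le> 10 / c / Hs" using c10 Hs0 by (intro divide_right_mono) auto
    finally show ?thesis .
  next
    case False
    have "E \<le> 4 * P2 * (1 + Hs) / (c * Hs^2) + 2 / (c * Hs)"
      using eb(3) unfolding E_def P2_def Hs_def .
    also have "4 * P2 * (1 + Hs) / (c * Hs^2) \<le> 8 / (c * Hs)"
    proof -
      have "4 * P2 * (1 + Hs) \<le> 4 * 1 * (2 * Hs)" using P2 P20 False
        by (intro mult_mono) auto
      then have "4 * P2 * (1 + Hs) / (c * Hs^2) \<le> (8 * Hs) / (c * Hs^2)"
        using assms Hs0 by (intro divide_right_mono) auto
      also have "(8 * Hs) / (c * Hs^2) = 8 / (c * Hs)" using Hs0 by (simp add: power2_eq_square)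
      finally show ?thesis .
    qed
    then have "4 * P2 * (1 + Hs) / (c * Hs^2) + 2 / (c * Hs) \<le> 8 / (c * Hs) + 2 / (c * Hs)" by linarith
    also have "8 / (c * Hs) + 2 / (c * Hs) = 10 / c / Hs" by (simp add: field_simps)
    finally show ?thesis .
  qed
  then show "(\<integral>a. measure lborel (Omega c X Y a) \<partial>seq_space) \<le> 10 / c / H X Y"
    unfolding E_def Hs_def .
qed


end
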